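(* Let $|s_0\rangle=|0\rangle$, $|s_1\rangle=-\tfrac12|0\rangle-\tfrac{\sqrt3}{2}|1\rangle$, $|s_2\rangle=-\tfrac12|0\rangle+\tfrac{\sqrt3}{2}|1\rangle$ and $|\psi_i\rangle=|s_i\rangle\otimes|s_i\rangle$ for $i=0,1,2$, each with prior $1/3$. For unambiguous discrimination of this ensemble, the maximum conclusive success probability is $3/4$ over all POVMs, $1/2$ over separable POVMs, and $1/2$ over LOCC measurements (attained by an LOCC protocol).
   Context: An unambiguous-discrimination POVM for $\{|\psi_i\rangle\}_{i=0}^2$ is a POVM $\{\Pi_0,\Pi_1,\Pi_2,\Pi_?\}$ with $\langle\psi_j|\Pi_i|\psi_j\rangle=0$ for all $i\ne j$ in $\{0,1,2\}$; its conclusive success probability is $\tfrac13\sum_{i=0}^2\langle\psi_i|\Pi_i|\psi_i\rangle$. A POVM is separable if each of its elements is a nonnegative combination of product projectors $|a\rangle\langle a|\otimes|b\rangle\langle b|$. LOCC means measurements implementable by local operations on each qubit and classical communication. *)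

theory Defs
  imports Complex_Main
begin

text \<open>Computational basis of a qubit indexed by bool (False = |0>, True = |1>).
  Two-qubit vectors and operators are indexed by bool \<times> bool (first component = qubit A).\<close>

type_synonym qvec = "bool \<Rightarrow> complex"
type_synonym qop  = "bool \<Rightarrow> bool \<Rightarrow> complex"
type_synonym tvec = "bool \<times> bool \<Rightarrow> complex"
type_synonym top  = "bool \<times> bool \<Rightarrow> bool \<times> bool \<Rightarrow> complex"

definition mmul :: "('a::finite \<Rightarrow> 'a \<Rightarrow> complex) \<Rightarrow> ('a \<Rightarrow> 'a \<Rightarrow> complex) \<Rightarrow> ('a \<Rightarrow> 'a \<Rightarrow> complex)" where
  "mmul A B = (\<lambda>i k. \<Sum>j\<in>UNIV. A i j * B j k)"

definition adj :: "('a \<Rightarrow> 'b \<Rightarrow> complex) \<Rightarrow> ('b \<Rightarrow> 'a \<Rightarrow> complex)" where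
  "adj A = (\<lambda>i j. cnj (A j i))"

definition idm :: "'a \<Rightarrow> 'a \<Rightarrow> complex" where
  "idm = (\<lambda>i j. if i = j then 1 else 0)"

definition zop :: "'a \<Rightarrow> 'a \<Rightarrow> complex" where
  "zop = (\<lambda>i j. 0)"

definition outer :: "('a \<Rightarrow> complex) \<Rightarrow> ('a \<Rightarrow> complex) \<Rightarrow> ('a \<Rightarrow> 'a \<Rightarrow> complex)" where
  "outer u v = (\<lambda>i j. u i * cnj (v j))"

definition inner :: "('a::finite \<Rightarrow> complex) \<Rightarrow> ('a \<Rightarrow> complex) \<Rightarrow> complex" where
  "inner u v = (\<Sum>i\<in>UNIV. cnj (u i) * v i)"

definition expect :: "('a::finite \<Rightarrow> complex) \<Rightarrow> ('a \<Rightarrow> 'a \<Rightarrow> complex) \<Rightarrow> complex" where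
  "expect v A = (\<Sum>i\<in>UNIV. \<Sum>j\<in>UNIV. cnj (v i) * A i j * v j)"

definition psd :: "('a::finite \<Rightarrow> 'a \<Rightarrow> complex) \<Rightarrow> bool" where
  "psd A \<longleftrightarrow> (\<forall>v. Im (expect v A) = 0 \<and> 0 \<le> Re (expect v A))"

definition tens :: "qvec \<Rightarrow> qvec \<Rightarrow> tvec" where
  "tens a b = (\<lambda>ij. a (fst ij) * b (snd ij))"

definition kron :: "qop \<Rightarrow> qop \<Rightarrow> top" where
  "kron A B = (\<lambda>ij kl. A (fst ij) (fst kl) * B (snd ij) (snd kl))"

text \<open>Outcomes of the discrimination measurement: conclusive 0,1,2 and inconclusive ?.\<close>
datatype res = R0 | R1 | R2 | RQ

lemma UNIV_res: "(UNIV :: res set) = {R0, R1, R2, RQ}"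
  by (auto intro: res.exhaust)

instance res :: finite
  by standard (simp add: UNIV_res)

definition lab :: "nat \<Rightarrow> res" where
  "lab i = (if i = 0 then R0 else if i = 1 then R1 else if i = 2 then R2 else RQ)"

definition povm :: "('o::finite \<Rightarrow> top) \<Rightarrow> bool" where
  "povm E \<longleftrightarrow> (\<forall>x. psd (E x)) \<and> (\<forall>i j. (\<Sum>x\<in>UNIV. E x i j) = idm i j)"

definition s :: "nat \<Rightarrow> qvec" where
  "s i = (if i = 0 then (\<lambda>b. if b then 0 else 1)
          else if i = 1 then (\<lambda>b. if b then - complex_of_real (sqrt 3 / 2) else - 1/2)
          else (\<lambda>b. if b then complex_of_real (sqrt 3 / 2) else - 1/2))"

definition psi :: "nat \<Rightarrow> tvec" where
  "psi i = tens (s i) (s i)"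

definition ud_povm :: "(res \<Rightarrow> top) \<Rightarrow> bool" where
  "ud_povm E \<longleftrightarrow> povm E \<and>
     (\<forall>i<3. \<forall>j<3. i \<noteq> j \<longrightarrow> expect (psi j) (E (lab i)) = 0)"

definition succ_prob :: "(res \<Rightarrow> top) \<Rightarrow> real" where
  "succ_prob E = (1/3) * (\<Sum>i<3. Re (expect (psi i) (E (lab i))))"

definition sep_elem :: "top \<Rightarrow> bool" where
  "sep_elem E \<longleftrightarrow> (\<exists>(n::nat) (c::nat \<Rightarrow> real) a b.
     (\<forall>k<n. 0 \<le> c k \<and> inner (a k) (a k) = 1 \<and> inner (b k) (b k) = 1) \<and>
     E = (\<lambda>i j. \<Sum>k<n. complex_of_real (c k) * outer (tens (a k) (b k)) (tens (a k) (b k)) i j))"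

definition sep_povm :: "('o::finite \<Rightarrow> top) \<Rightarrow> bool" where
  "sep_povm E \<longleftrightarrow> povm E \<and> (\<forall>x. sep_elem (E x))"

text \<open>A protocol either stops and announces a fixed outcome x0, or one party (A or B)
  performs a local instrument with Kraus operators K_0..K_{m-1} (sum K_k^* K_k = I),
  announces k, and the parties continue with an LOCC protocol F k depending on k.\<close>
inductive locc :: "('o \<Rightarrow> top) \<Rightarrow> bool" where
  stop: "locc (\<lambda>x::'o. if x = x0 then idm else zop)"
| stepA: "\<lbrakk> \<forall>i j. (\<Sum>k<m. mmul (adj ((K::nat \<Rightarrow> qop) k)) (K k) i j) = idm i j;
           \<forall>k<m. locc ((F::nat \<Rightarrow> 'o \<Rightarrow> top) k) \<rbrakk> \<Longrightarrow>
         locc (\<lambda>x i j. \<Sum>k<m. mmul (adj (kron (K k) idm)) (mmul (F k x) (kron (K k) idm)) i j)"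
| stepB: "\<lbrakk> \<forall>i j. (\<Sum>k<m. mmul (adj ((K::nat \<Rightarrow> qop) k)) (K k) i j) = idm i j;
           \<forall>k<m. locc ((F::nat \<Rightarrow> 'o \<Rightarrow> top) k) \<rbrakk> \<Longrightarrow>
         locc (\<lambda>x i j. \<Sum>k<m. mmul (adj (kron idm (K k))) (mmul (F k x) (kron idm (K k))) i j)"

definition locc_povm :: "('o::finite \<Rightarrow> top) \<Rightarrow> bool" where
  "locc_povm E \<longleftrightarrow> povm E \<and> locc E"

end

theory Submission
  imports Defs
begin


lemma sum_b: "(\<Sum>x\<in>(UNIV::bool set). f x) = f False + f True"
  by (simp add: UNIV_bool)
lemma UNIV_bb: "(UNIV::(bool\<times>bool) set) = {(False,False),(False,True),(True,False),(True,True)}"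
  by auto
lemma sum_bb: "(\<Sum>x\<in>(UNIV::(bool\<times>bool) set). f x) = f (False,False) + f (False,True) + f (True,False) + f (True,True)"
  by (simp add: UNIV_bb add.assoc)
lemma sum_res: "(\<Sum>x\<in>(UNIV::res set). f x) = f R0 + f R1 + f R2 + f RQ"
  by (simp add: UNIV_res add.assoc)

definition bil :: "('a::finite \<Rightarrow> complex) \<Rightarrow> ('a \<Rightarrow> 'a \<Rightarrow> complex) \<Rightarrow> ('a \<Rightarrow> complex) \<Rightarrow> complex" where
  "bil x A y = (\<Sum>i\<in>UNIV. \<Sum>j\<in>UNIV. cnj (x i) * A i j * y j)"

lemma expect_bil: "expect v A = bil v A v" by (simp add: expect_def bil_def)

lemma expect_lin: "expect (\<lambda>i. u i + t * w i) A = expect u A + t * bil u A w + cnj t * bil w A u + (t * cnj t) * expect w A"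
  by (simp add: expect_def bil_def algebra_simps sum.distrib sum_distrib_left)

lemma expect_outer: "expect v (outer u u) = inner v u * cnj (inner v u)"
  unfolding expect_def outer_def inner_def
  by (simp only: cnj_sum complex_cnj_mult complex_cnj_cnj sum_product, intro sum.cong refl, simp add: mult_ac)

lemma expect_add: "expect v (\<lambda>i j. A i j + B i j) = expect v A + expect v B"
  by (simp add: expect_def algebra_simps sum.distrib)
lemma expect_smult: "expect v (\<lambda>i j. c * A i j) = c * expect v A"
  by (simp add: expect_def algebra_simps sum_distrib_left)
lemma expect_sum: "expect v (\<lambda>i j. \<Sum>k\<in>S. F k i j) = (\<Sum>k\<in>S. expect v (F k))"
proof -
  have "expect v (\<lambda>i j. \<Sum>k\<in>S. F k i j) = (\<Sum>i\<in>UNIV. \<Sum>j\<in>UNIV. \<Sum>k\<in>S. cnj (v i) * F k i j * v j)"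
    unfolding expect_def by (simp add: sum_distrib_left sum_distrib_right)
  also have "\<dots> = (\<Sum>i\<in>UNIV. \<Sum>k\<in>S. \<Sum>j\<in>UNIV. cnj (v i) * F k i j * v j)"
    by (rule sum.cong[OF refl], rule sum.swap)
  also have "\<dots> = (\<Sum>k\<in>S. expect v (F k))"
    unfolding expect_def by (rule sum.swap)
  finally show ?thesis .
qed
lemma expect_zop: "expect v zop = 0" by (simp add: expect_def zop_def)


lemma quad0: fixes c d :: real assumes "\<forall>r. 0 \<le> r * c + r^2 * d" shows "c = 0"
proof (rule ccontr)
  assume c: "c \<noteq> 0"
  define e where "e = 1 / (\<bar>d\<bar> + 1)"
  have e: "e > 0" "e * \<bar>d\<bar> < 1" unfolding e_def by (auto simp: field_simps)
  have "0 \<le> (-e*c) * c + (-e*c)^2 * d" using assms by blast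
  also have "\<dots> = e * c^2 * (e * d - 1)" by (simp add: power2_eq_square algebra_simps)
  also have "\<dots> < 0"
  proof -
    have "e*d - 1 < 0" using e by (smt (verit) abs_ge_self mult_left_mono)
    moreover have "e * c^2 > 0" using e c by simp
    ultimately show ?thesis by (simp add: mult_pos_neg)
  qed
  finally show False by simp
qed

lemma psd_kill:
  assumes "psd A" "expect u A = 0"
  shows "bil u A w = 0 \<and> bil w A u = 0"
proof -
  define a where "a = bil u A w"
  define b where "b = bil w A u"
  define q where "q = expect w A"
  have E: "\<And>t. expect (\<lambda>i. u i + t * w i) A = t * a + cnj t * b + (t * cnj t) * q"
    using assms(2) by (simp add: expect_lin a_def b_def q_def)
  have P: "\<And>t. Im (t * a + cnj t * b + (t * cnj t) * q) = 0 \<and> 0 \<le> Re (t * a + cnj t * b + (t * cnj t) * q)"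
    using assms(1) unfolding psd_def by (metis E)
  have q: "Im q = 0" using assms(1) unfolding psd_def q_def by blast
  have i1: "Im a + Im b = 0" using P[of 1] q by simp
  have i2: "Re a - Re b = 0" using P[of \<i>] q by simp
  have r1: "\<forall>r. 0 \<le> r * (Re a + Re b) + r^2 * Re q"
  proof
    fix r :: real show "0 \<le> r * (Re a + Re b) + r^2 * Re q"
      using P[of "complex_of_real r"] by (simp add: power2_eq_square algebra_simps)
  qed
  have r2: "\<forall>r. 0 \<le> r * (Im b - Im a) + r^2 * Re q"
  proof
    fix r :: real show "0 \<le> r * (Im b - Im a) + r^2 * Re q"
      using P[of "\<i> * complex_of_real r"] by (simp add: power2_eq_square algebra_simps)
  qed
  have "Re a + Re b = 0" by (rule quad0[OF r1])
  moreover have "Im b - Im a = 0" by (rule quad0[OF r2])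
  ultimately have "a = 0" "b = 0" using i1 i2 by (simp_all add: complex_eq_iff)
  thus ?thesis by (simp add: a_def b_def)
qed




definition r3 :: complex where "r3 = complex_of_real (sqrt 3)"
lemma r3sq: "r3 * r3 = 3" unfolding r3_def by (simp flip: of_real_mult)
lemma r3sq2: "r3 * (r3 * x) = 3 * x" by (simp add: mult.assoc[symmetric] r3sq)
lemma r3Re[simp]: "Re r3 = sqrt 3" and r3Im[simp]: "Im r3 = 0" by (simp_all add: r3_def)
lemma r3cnj[simp]: "cnj r3 = r3" unfolding r3_def by simp

lemma s0F[simp]: "s 0 False = 1" and s0T[simp]: "s 0 True = 0"
  and s1F[simp]: "s (Suc 0) False = -1/2" and s1T[simp]: "s (Suc 0) True = - r3/2"
  and s2F[simp]: "s 2 False = -1/2" and s2T[simp]: "s 2 True = r3/2"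
  by (simp_all add: s_def r3_def)

lemma psi_app[simp]: "psi i (p,q) = s i p * s i q" by (simp add: psi_def tens_def)

lemma "expect (\<lambda>x. psi 0 x + (-1) * psi 1 x) idm = 3/2"
  apply (simp add: expect_def idm_def sum_bb if_distrib cong: if_cong)
  apply (simp add: r3sq r3sq2)
  done


lemma povm_sum_expect:
  assumes "povm E" shows "(\<Sum>x\<in>UNIV. expect v (E x)) = expect v idm"
proof -
  have "(\<lambda>i j. \<Sum>x\<in>UNIV. E x i j) = idm" using assms unfolding povm_def by blast
  hence "expect v idm = expect v (\<lambda>i j. \<Sum>x\<in>UNIV. E x i j)" by simp
  thus ?thesis by (simp add: expect_sum)
qed

lemma pair_bound:
  fixes E :: "'o::finite \<Rightarrow> top"
  assumes P: "povm E" and h1: "expect u2 (E X) = 0" and h2: "expect u1 (E Y) = 0" and XY: "X \<noteq> Y"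
  shows "Re (expect u1 (E X)) + Re (expect u2 (E Y)) \<le> Re (expect (\<lambda>i. u1 i + (-1) * u2 i) idm)"
proof -
  define v where "v = (\<lambda>i. u1 i + (-1) * u2 i)"
  have ps: "\<And>x. psd (E x)" using P unfolding povm_def by blast
  have k1: "bil u2 (E X) u1 = 0 \<and> bil u1 (E X) u2 = 0" using psd_kill[OF ps h1] by blast
  have k2: "bil u1 (E Y) u2 = 0 \<and> bil u2 (E Y) u1 = 0" using psd_kill[OF ps h2] by blast
  have eX: "expect v (E X) = expect u1 (E X)" unfolding v_def expect_lin using k1 h1 by simp
  have eY: "expect v (E Y) = expect u2 (E Y)"
  proof -
    have "expect v (E Y) = expect (\<lambda>i. u2 i + (-1) * u1 i) (E Y)"
      unfolding v_def expect_lin using k2 h2 by simp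
    also have "\<dots> = expect u2 (E Y)" unfolding expect_lin using k2 h2 by simp
    finally show ?thesis .
  qed
  have "Re (expect v (E X)) + Re (expect v (E Y)) = (\<Sum>x\<in>{X,Y}. Re (expect v (E x)))"
    using XY by simp
  also have "\<dots> \<le> (\<Sum>x\<in>UNIV. Re (expect v (E x)))"
    by (rule sum_mono2) (use ps psd_def in auto)
  also have "\<dots> = Re (expect v idm)" using povm_sum_expect[OF P, of v] by (simp flip: Re_sum)
  finally show ?thesis using eX eY by (simp add: v_def)
qed


lemma lab_simps[simp]: "lab 0 = R0" "lab (Suc 0) = R1" "lab 2 = R2"
  by (simp_all add: lab_def)

lemma sum3: "(\<Sum>i<3. f i) = f 0 + f (Suc 0) + (f 2 :: 'a::comm_monoid_add)"
  by (simp add: numeral_3_eq_3 eval_nat_numeral add.assoc)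

lemma ud_zero:
  assumes "ud_povm E"
  shows "expect (psi (Suc 0)) (E R0) = 0" "expect (psi 2) (E R0) = 0"
    "expect (psi 0) (E R1) = 0" "expect (psi 2) (E R1) = 0"
    "expect (psi 0) (E R2) = 0" "expect (psi (Suc 0)) (E R2) = 0"
proof -
  have H: "\<forall>i<3. \<forall>j<3. i \<noteq> j \<longrightarrow> expect (psi j) (E (lab i)) = 0" using assms unfolding ud_povm_def by blast
  show "expect (psi (Suc 0)) (E R0) = 0" using H[rule_format, of 0 1] by simp
  show "expect (psi 2) (E R0) = 0" using H[rule_format, of 0 2] by simp
  show "expect (psi 0) (E R1) = 0" using H[rule_format, of 1 0] by simp
  show "expect (psi 2) (E R1) = 0" using H[rule_format, of 1 2] by simp
  show "expect (psi 0) (E R2) = 0" using H[rule_format, of 2 0] by simp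
  show "expect (psi (Suc 0)) (E R2) = 0" using H[rule_format, of 2 1] by simp
qed

lemma nrm01: "Re (expect (\<lambda>x. psi 0 x + (-1) * psi (Suc 0) x) idm) = 3/2"
  by (simp add: expect_def idm_def sum_bb if_distrib cong: if_cong)
lemma nrm02: "Re (expect (\<lambda>x. psi 0 x + (-1) * psi 2 x) idm) = 3/2"
  by (simp add: expect_def idm_def sum_bb if_distrib cong: if_cong)
lemma nrm12: "Re (expect (\<lambda>x. psi (Suc 0) x + (-1) * psi 2 x) idm) = 3/2"
  by (simp add: expect_def idm_def sum_bb if_distrib cong: if_cong)

lemma bound1: assumes "ud_povm E" shows "succ_prob E \<le> 3/4"
proof -
  have P: "povm E" using assms unfolding ud_povm_def by blast
  note z = ud_zero[OF assms]
  have a: "Re (expect (psi 0) (E R0)) + Re (expect (psi (Suc 0)) (E R1)) \<le> 3/2"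
    using pair_bound[OF P z(1) z(3)] nrm01 by simp
  have b: "Re (expect (psi 0) (E R0)) + Re (expect (psi 2) (E R2)) \<le> 3/2"
    using pair_bound[OF P z(2) z(5)] nrm02 by simp
  have c: "Re (expect (psi (Suc 0)) (E R1)) + Re (expect (psi 2) (E R2)) \<le> 3/2"
    using pair_bound[OF P z(4) z(6)] nrm12 by simp
  show ?thesis unfolding succ_prob_def sum3 using a b c by simp
qed




inductive sepc :: "top \<Rightarrow> bool" where
  sz: "sepc zop"
| sa: "sepc A \<Longrightarrow> sepc (\<lambda>i j. A i j + outer (tens a b) (tens a b) i j)"

lemma cnj_mult_self: "Im (z * cnj z) = 0 \<and> 0 \<le> Re (z * cnj z)"
  by (simp add: complex_mult_cnj)

lemma psd_zop: "psd zop" by (simp add: psd_def expect_zop)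

lemma sepc_psd: "sepc A \<Longrightarrow> psd A"
proof (induction rule: sepc.induct)
  case sz thus ?case by (rule psd_zop)
next
  case (sa A a b)
  show ?case unfolding psd_def
  proof
    fix v
    have "expect v (\<lambda>i j. A i j + outer (tens a b) (tens a b) i j) = expect v A + expect v (outer (tens a b) (tens a b))"
      by (rule expect_add)
    thus "Im (expect v (\<lambda>i j. A i j + outer (tens a b) (tens a b) i j)) = 0 \<and>
          0 \<le> Re (expect v (\<lambda>i j. A i j + outer (tens a b) (tens a b) i j))"
      using sa.IH unfolding psd_def expect_outer using cnj_mult_self[of "inner v (tens a b)"]
      by (metis add_nonneg_nonneg plus_complex.sel add.right_neutral)
  qed
qed

lemma sepc_plus: "sepc B \<Longrightarrow> sepc A \<Longrightarrow> sepc (\<lambda>i j. A i j + B i j)"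
proof (induction rule: sepc.induct)
  case sz thus ?case by (simp add: zop_def)
next
  case (sa B a b)
  have "sepc (\<lambda>i j. (A i j + B i j) + outer (tens a b) (tens a b) i j)"
    by (rule sepc.sa) (rule sa.IH[OF sa.prems])
  thus ?case by (simp add: add.assoc)
qed

lemma sepc_sum: "(\<forall>k<(m::nat). sepc (F k)) \<Longrightarrow> sepc (\<lambda>i j. \<Sum>k<m. F k i j)"
proof (induction m)
  case 0 thus ?case using sepc.sz by (simp add: zop_def)
next
  case (Suc m)
  have "sepc (\<lambda>i j. (\<Sum>k<m. F k i j) + F m i j)"
    by (rule sepc_plus) (use Suc in auto)
  thus ?case by simp
qed

definition cj :: "top \<Rightarrow> top \<Rightarrow> top" where "cj M A = mmul (adj M) (mmul A M)"
definition mva :: "('a::finite \<Rightarrow> 'a \<Rightarrow> complex) \<Rightarrow> ('a \<Rightarrow> complex) \<Rightarrow> ('a \<Rightarrow> complex)" where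
  "mva M u = (\<lambda>j. \<Sum>p\<in>UNIV. cnj (M p j) * u p)"

lemma cj_zop: "cj M zop = zop" by (simp add: cj_def mmul_def zop_def)
lemma cj_add: "cj M (\<lambda>i j. A i j + B i j) = (\<lambda>i j. cj M A i j + cj M B i j)"
  by (simp add: cj_def mmul_def adj_def algebra_simps sum.distrib sum_distrib_left)
lemma cj_outer: "cj M (outer u u) = outer (mva M u) (mva M u)"
proof (intro ext)
  fix i k
  have "cj M (outer u u) i k = (\<Sum>p\<in>UNIV. \<Sum>q\<in>UNIV. (cnj (M p i) * u p) * (M q k * cnj (u q)))"
    unfolding cj_def mmul_def adj_def outer_def
    by (simp add: sum_distrib_left mult_ac)
  also have "\<dots> = outer (mva M u) (mva M u) i k"
    unfolding outer_def mva_def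
    by (simp only: cnj_sum complex_cnj_mult complex_cnj_cnj sum_product)
  finally show "cj M (outer u u) i k = outer (mva M u) (mva M u) i k" .
qed

lemma mva_kronA: "mva (kron K idm) (tens a b) = tens (mva K a) b"
  by (rule ext) (auto simp: mva_def kron_def tens_def idm_def sum_bb sum_b algebra_simps)
lemma mva_kronB: "mva (kron idm K) (tens a b) = tens a (mva K b)"
  by (rule ext) (auto simp: mva_def kron_def tens_def idm_def sum_bb sum_b algebra_simps)

lemma sepc_cjA: "sepc A \<Longrightarrow> sepc (cj (kron K idm) A)"
proof (induction rule: sepc.induct)
  case sz thus ?case by (simp add: cj_zop sepc.sz)
next
  case (sa A a b) thus ?case by (simp add: cj_add cj_outer mva_kronA sepc.sa)
qed
lemma sepc_cjB: "sepc A \<Longrightarrow> sepc (cj (kron idm K) A)"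
proof (induction rule: sepc.induct)
  case sz thus ?case by (simp add: cj_zop sepc.sz)
next
  case (sa A a b) thus ?case by (simp add: cj_add cj_outer mva_kronB sepc.sa)
qed

definition e0 :: qvec where "e0 = (\<lambda>b. if b then 0 else 1)"
definition e1 :: qvec where "e1 = (\<lambda>b. if b then 1 else 0)"

lemma sepc_idm: "sepc idm"
proof -
  have "sepc (\<lambda>i j. (\<lambda>i j. (\<lambda>i j. (\<lambda>i j. zop i j + outer (tens e0 e0) (tens e0 e0) i j) i j
      + outer (tens e0 e1) (tens e0 e1) i j) i j + outer (tens e1 e0) (tens e1 e0) i j) i j
      + outer (tens e1 e1) (tens e1 e1) i j)"
    by (intro sepc.intros)
  moreover have "(\<lambda>i j. (\<lambda>i j. (\<lambda>i j. (\<lambda>i j. zop i j + outer (tens e0 e0) (tens e0 e0) i j) i j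
      + outer (tens e0 e1) (tens e0 e1) i j) i j + outer (tens e1 e0) (tens e1 e0) i j) i j
      + outer (tens e1 e1) (tens e1 e1) i j) = idm"
    by (intro ext) (auto simp: zop_def outer_def tens_def e0_def e1_def idm_def)
  ultimately show ?thesis by simp
qed

lemma locc_sepc: "locc E \<Longrightarrow> sepc (E x)"
proof (induction arbitrary: x rule: locc.induct)
  case (stop x0) thus ?case by (simp add: sepc_idm sepc.sz)
next
  case (stepA K m F)
  show ?case using sepc_sum[of m "\<lambda>k. cj (kron (K k) idm) (F k x)"] stepA.IH sepc_cjA
    unfolding cj_def by blast
next
  case (stepB K m F)
  show ?case using sepc_sum[of m "\<lambda>k. cj (kron idm (K k)) (F k x)"] stepB.IH sepc_cjB
    unfolding cj_def by blast
qed

lemma sep_elem_sepc: "sep_elem E \<Longrightarrow> sepc E"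
proof -
  assume "sep_elem E"
  then obtain n c a b where h: "\<forall>k<(n::nat). 0 \<le> c k \<and> inner (a k) (a k) = 1 \<and> inner (b k) (b k) = 1" and E: "E = (\<lambda>i j. \<Sum>k<n. complex_of_real (c k) * outer (tens (a k) (b k)) (tens (a k) (b k)) i j)"
    unfolding sep_elem_def by blast
  have "\<forall>k<n. sepc (\<lambda>i j. complex_of_real (c k) * outer (tens (a k) (b k)) (tens (a k) (b k)) i j)"
  proof (intro allI impI)
    fix k assume k: "k < n"
    define a' where "a' = (\<lambda>p. complex_of_real (sqrt (c k)) * a k p)"
    have "sepc (\<lambda>i j. zop i j + outer (tens a' (b k)) (tens a' (b k)) i j)" by (intro sepc.intros)
    moreover have "(\<lambda>i j. zop i j + outer (tens a' (b k)) (tens a' (b k)) i j) = (\<lambda>i j. complex_of_real (c k) * outer (tens (a k) (b k)) (tens (a k) (b k)) i j)"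
    proof (intro ext)
      fix i j
      have "complex_of_real (sqrt (c k)) * complex_of_real (sqrt (c k)) = complex_of_real (c k)"
        using h k by (simp flip: of_real_mult)
      thus "zop i j + outer (tens a' (b k)) (tens a' (b k)) i j = complex_of_real (c k) * outer (tens (a k) (b k)) (tens (a k) (b k)) i j"
        by (simp add: zop_def outer_def tens_def a'_def mult_ac)
    qed
    ultimately show "sepc (\<lambda>i j. complex_of_real (c k) * outer (tens (a k) (b k)) (tens (a k) (b k)) i j)" by simp
  qed
  thus "sepc E" unfolding E by (rule sepc_sum)
qed




lemma zcz: "z * cnj z = complex_of_real (cmod z ^ 2)" using complex_norm_square[of z] by simp

lemma inner_tens: "inner (tens u v) (tens a b) = inner u a * inner v b"
  unfolding inner_def tens_def sum_bb by (simp add: sum_b algebra_simps)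

lemma inner_s0: "inner (s 0) a = a False" by (simp add: inner_def sum_b)
lemma inner_s1: "inner (s (Suc 0)) a = - a False / 2 - r3 * a True / 2" by (simp add: inner_def sum_b)
lemma inner_s2: "inner (s 2) a = - a False / 2 + r3 * a True / 2" by (simp add: inner_def sum_b)

definition w :: tvec where "w = (\<lambda>pq. if pq = (False,True) then 1 else if pq = (True,False) then -1 else 0)"
lemma inner_w: "inner w (tens a b) = a False * b True - a True * b False"
  by (simp add: inner_def sum_bb w_def tens_def)

lemma cm: fixes P D c :: complex assumes "2 * P = c * D" "c * c = 3"
  shows "4 * cmod P ^ 2 \<le> 3 * cmod D ^ 2"
proof -
  have "cmod (2*P) ^2 = cmod (c*c) * cmod D ^ 2" using assms(1) by (simp add: norm_mult power2_eq_square)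
  thus ?thesis using assms(2) by (simp add: norm_mult power2_eq_square)
qed

lemma cm': fixes P D :: complex assumes "2 * P = r3 * D \<or> 2 * P = - r3 * D \<or> P = 0"
  shows "4 * cmod P ^ 2 \<le> 3 * cmod D ^ 2"
  using assms cm[of P r3 D] cm[of P "-r3" D] by (auto simp: r3sq)

lemma r3nz: "r3 \<noteq> 0" using r3sq by auto
lemma sol1: "- x / 2 - r3 * y / 2 = 0 \<longleftrightarrow> x = - r3 * (y::complex)" by (auto simp: field_simps minus_equation_iff[of x])
lemma sol2: "- x / 2 + r3 * y / 2 = 0 \<longleftrightarrow> x = r3 * (y::complex)" by (auto simp: field_simps)
lemma r3cnc[simp]: "-r3 * -r3 = 3" by (simp add: r3sq)

lemma pt0: fixes x y u v :: complex
  assumes "(- x / 2 - r3 * y / 2) * (- u / 2 - r3 * v / 2) = 0"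
      "(- x / 2 + r3 * y / 2) * (- u / 2 + r3 * v / 2) = 0"
  shows "4 * cmod (x * u) ^ 2 \<le> 3 * cmod (x * v - y * u) ^ 2"
  apply (rule cm')
  using assms unfolding mult_eq_0_iff sol1 sol2
  by (auto simp: r3nz algebra_simps r3sq r3sq2)

lemma pt1: fixes x y u v :: complex
  assumes "x * u = 0"
      "(- x / 2 + r3 * y / 2) * (- u / 2 + r3 * v / 2) = 0"
  shows "4 * cmod ((- x / 2 - r3 * y / 2) * (- u / 2 - r3 * v / 2)) ^ 2 \<le> 3 * cmod (x * v - y * u) ^ 2"
  apply (rule cm')
  using assms unfolding mult_eq_0_iff sol1 sol2
  by (auto simp: r3nz algebra_simps r3sq r3sq2)

lemma pt2: fixes x y u v :: complex
  assumes "x * u = 0"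
      "(- x / 2 - r3 * y / 2) * (- u / 2 - r3 * v / 2) = 0"
  shows "4 * cmod ((- x / 2 + r3 * y / 2) * (- u / 2 + r3 * v / 2)) ^ 2 \<le> 3 * cmod (x * v - y * u) ^ 2"
  apply (rule cm')
  using assms unfolding mult_eq_0_iff sol1 sol2
  by (auto simp: r3nz algebra_simps r3sq r3sq2)


lemma Kgen:
  assumes "sepc A"
    and pt: "\<forall>a b. inner (psi j) (tens a b) = 0 \<longrightarrow> inner (psi k) (tens a b) = 0 \<longrightarrow>
          4 * cmod (inner (psi i) (tens a b)) ^ 2 \<le> 3 * cmod (inner w (tens a b)) ^ 2"
  shows "expect (psi j) A = 0 \<Longrightarrow> expect (psi k) A = 0 \<Longrightarrow> Re (expect (psi i) A) \<le> 3/4 * Re (expect w A)"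
  using assms(1)
proof (induction rule: sepc.induct)
  case sz thus ?case by (simp add: expect_zop)
next
  case (sa A a b)
  have ex: "\<And>v. expect v (\<lambda>i j. A i j + outer (tens a b) (tens a b) i j) = expect v A + complex_of_real (cmod (inner v (tens a b)) ^ 2)"
    by (simp add: expect_add expect_outer zcz)
  have ps: "psd A" using sa.hyps by (rule sepc_psd)
  have z: "expect v A = 0 \<and> inner v (tens a b) = 0"
    if h: "expect v (\<lambda>i j. A i j + outer (tens a b) (tens a b) i j) = 0" for v
  proof -
    have "Re (expect v A) + cmod (inner v (tens a b)) ^ 2 = 0" "Im (expect v A) = 0"
      using arg_cong[OF h[unfolded ex], of Re] ps unfolding psd_def by auto
    moreover have "Re (expect v A) \<ge> 0" using ps unfolding psd_def by blast
    ultimately have "Re (expect v A) = 0" "cmod (inner v (tens a b)) = 0" by (smt (verit) zero_le_power2 power2_eq_square zero_eq_power2)+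
    thus ?thesis using \<open>Im (expect v A) = 0\<close> by (simp add: complex_eq_iff)
  qed
  from z[OF sa.prems(1)] z[OF sa.prems(2)] have
    A1: "expect (psi j) A = 0" "expect (psi k) A = 0" and
    B1: "inner (psi j) (tens a b) = 0" "inner (psi k) (tens a b) = 0" by auto
  have "Re (expect (psi i) A) \<le> 3/4 * Re (expect w A)" using sa.IH A1 by blast
  moreover have "cmod (inner (psi i) (tens a b)) ^ 2 \<le> 3/4 * cmod (inner w (tens a b)) ^ 2"
    using pt B1 by force
  ultimately show ?case unfolding ex by simp
qed

lemma pt_0: "\<forall>a b. inner (psi (Suc 0)) (tens a b) = 0 \<longrightarrow> inner (psi 2) (tens a b) = 0 \<longrightarrow>
          4 * cmod (inner (psi 0) (tens a b)) ^ 2 \<le> 3 * cmod (inner w (tens a b)) ^ 2"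
  unfolding psi_def inner_tens inner_s0 inner_s1 inner_s2 inner_w using pt0 by blast
lemma pt_1: "\<forall>a b. inner (psi 0) (tens a b) = 0 \<longrightarrow> inner (psi 2) (tens a b) = 0 \<longrightarrow>
          4 * cmod (inner (psi (Suc 0)) (tens a b)) ^ 2 \<le> 3 * cmod (inner w (tens a b)) ^ 2"
  unfolding psi_def inner_tens inner_s0 inner_s1 inner_s2 inner_w using pt1 by blast
lemma pt_2: "\<forall>a b. inner (psi 0) (tens a b) = 0 \<longrightarrow> inner (psi (Suc 0)) (tens a b) = 0 \<longrightarrow>
          4 * cmod (inner (psi 2) (tens a b)) ^ 2 \<le> 3 * cmod (inner w (tens a b)) ^ 2"
  unfolding psi_def inner_tens inner_s0 inner_s1 inner_s2 inner_w using pt2 by blast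

lemma nrmw: "Re (expect w idm) = 2"
  by (simp add: expect_def idm_def sum_bb w_def)

lemma bound2: assumes "ud_povm E" "\<And>x. sepc (E x)" shows "succ_prob E \<le> 1/2"
proof -
  have P: "povm E" using assms unfolding ud_povm_def by blast
  note z = ud_zero[OF assms(1)]
  have a: "Re (expect (psi 0) (E R0)) \<le> 3/4 * Re (expect w (E R0))"
    by (rule Kgen[OF assms(2) pt_0 z(1) z(2)])
  have b: "Re (expect (psi (Suc 0)) (E R1)) \<le> 3/4 * Re (expect w (E R1))"
    by (rule Kgen[OF assms(2) pt_1 z(3) z(4)])
  have c: "Re (expect (psi 2) (E R2)) \<le> 3/4 * Re (expect w (E R2))"
    by (rule Kgen[OF assms(2) pt_2 z(5) z(6)])
  have "(\<Sum>x\<in>UNIV. Re (expect w (E x))) = 2"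
    using povm_sum_expect[OF P, of w] nrmw by (simp flip: Re_sum)
  moreover have "Re (expect w (E RQ)) \<ge> 0" using P unfolding povm_def psd_def by blast
  ultimately have "Re (expect w (E R0)) + Re (expect w (E R1)) + Re (expect w (E R2)) \<le> 2"
    unfolding sum_res by simp
  thus ?thesis unfolding succ_prob_def sum3 using a b c by simp
qed




definition vec4 :: "complex \<Rightarrow> complex \<Rightarrow> complex \<Rightarrow> complex \<Rightarrow> tvec" where
  "vec4 a b c d = (\<lambda>pq. if fst pq then (if snd pq then d else c) else (if snd pq then b else a))"
lemma vec4_app[simp]: "vec4 a b c d (False,False) = a" "vec4 a b c d (False,True) = b"
  "vec4 a b c d (True,False) = c" "vec4 a b c d (True,True) = d" by (simp_all add: vec4_def)

lemma psd_add: "psd A \<Longrightarrow> psd B \<Longrightarrow> psd (\<lambda>i j. A i j + B i j)"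
  by (simp add: psd_def expect_add)
lemma psd_so: "0 \<le> r \<Longrightarrow> psd (\<lambda>i j. complex_of_real r * outer u u i j)"
  unfolding psd_def expect_smult[of _ "complex_of_real r" "outer u u", simplified] expect_outer zcz
  by (simp flip: of_real_mult)

definition sc :: "real \<Rightarrow> top \<Rightarrow> top" where "sc r A = (\<lambda>i j. complex_of_real r * A i j)"
lemma psd_sc: "0 \<le> r \<Longrightarrow> psd (sc r (outer u u))" unfolding sc_def by (rule psd_so)
lemma exp_sc: "expect v (sc r (outer u u)) = complex_of_real r * (inner v u * cnj (inner v u))"
  unfolding sc_def by (simp add: expect_smult[of _ "complex_of_real r" "outer u u", simplified] expect_outer)

definition ph0 :: tvec where "ph0 = vec4 3 0 0 (-1)"
definition ph1 :: tvec where "ph1 = vec4 0 r3 r3 2"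
definition ph2 :: tvec where "ph2 = vec4 0 (-r3) (-r3) 2"
definition uu :: tvec where "uu = vec4 1 0 0 1"

definition EG :: "res \<Rightarrow> top" where
  "EG x = (case x of R0 \<Rightarrow> sc (1/12) (outer ph0 ph0)
                   | R1 \<Rightarrow> sc (1/12) (outer ph1 ph1)
                   | R2 \<Rightarrow> sc (1/12) (outer ph2 ph2)
                   | RQ \<Rightarrow> (\<lambda>i j. sc (1/4) (outer uu uu) i j + sc (1/2) (outer w w) i j))"

lemma ud_intro:
  assumes "povm E"
   "expect (psi (Suc 0)) (E R0) = 0" "expect (psi 2) (E R0) = 0"
    "expect (psi 0) (E R1) = 0" "expect (psi 2) (E R1) = 0"
    "expect (psi 0) (E R2) = 0" "expect (psi (Suc 0)) (E R2) = 0"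
  shows "ud_povm E"
  unfolding ud_povm_def using assms
  by (auto simp: numeral_3_eq_3 less_Suc_eq eval_nat_numeral lab_def)

lemma EG_povm: "povm EG"
  unfolding povm_def
proof (intro conjI allI)
  fix x show "psd (EG x)"
    by (cases x) (auto simp: EG_def intro!: psd_sc psd_add)
next
  fix i j :: "bool \<times> bool"
  show "(\<Sum>x\<in>UNIV. EG x i j) = idm i j"
    unfolding sum_res EG_def sc_def
    by (cases i; cases j; auto simp: outer_def ph0_def ph1_def ph2_def uu_def w_def idm_def vec4_def r3sq)
qed

lemma exp_so: "expect v (\<lambda>i j. complex_of_real r * outer u u i j) = complex_of_real r * (inner v u * cnj (inner v u))"
  by (simp add: expect_smult[of _ "complex_of_real r" "outer u u", simplified] expect_outer)

lemma EG_ud: "ud_povm EG"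
  by (rule ud_intro[OF EG_povm]) (simp_all add: EG_def exp_sc inner_def sum_bb ph0_def ph1_def ph2_def r3sq r3sq2 algebra_simps)

lemma EG_succ: "succ_prob EG = 3/4"
  unfolding succ_prob_def sum3
  by (simp add: EG_def exp_sc inner_def sum_bb ph0_def ph1_def ph2_def r3sq r3sq2 algebra_simps)




lemma sum9: "(\<Sum>k<(9::nat). f k) = f 0 + f 1 + f 2 + f 3 + f 4 + f 5 + f 6 + f 7 + (f 8 :: 'a::comm_monoid_add)"
proof -
  have "{..<9::nat} = {0,1,2,3,4,5,6,7,8}" by auto
  thus ?thesis by (simp add: add.assoc add.left_commute add.commute)
qed

definition pv :: "nat \<Rightarrow> qvec" where
  "pv i = (if i = 0 then (\<lambda>b. if b then 1 else 0) else if i = 1 then (\<lambda>b. if b then -1/2 else r3/2)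
           else (\<lambda>b. if b then 1/2 else r3/2))"
definition out :: "nat \<Rightarrow> nat \<Rightarrow> res" where "out a b = (if a = b then RQ else lab (3 - a - b))"
definition cc :: "res \<Rightarrow> nat \<Rightarrow> real" where "cc x k = (if out (k div 3) (k mod 3) = x then 4/9 else 0)"
definition ES :: "res \<Rightarrow> top" where
  "ES x = (\<lambda>i j. \<Sum>k<9. complex_of_real (cc x k) * outer (tens (pv (k div 3)) (pv (k mod 3))) (tens (pv (k div 3)) (pv (k mod 3))) i j)"

lemma ES_sep: "sep_elem (ES x)"
  unfolding sep_elem_def
proof (intro exI conjI allI impI)
  show "ES x = (\<lambda>i j. \<Sum>k<9. complex_of_real (cc x k) * outer (tens (pv (k div 3)) (pv (k mod 3))) (tens (pv (k div 3)) (pv (k mod 3))) i j)"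
    by (simp add: ES_def)
next
  fix k :: nat assume "k < 9"
  show "0 \<le> cc x k" by (simp add: cc_def)
  have u: "\<And>i. i < 3 \<Longrightarrow> inner (pv i) (pv i) = 1"
    by (auto simp: pv_def inner_def sum_b r3sq numeral_3_eq_3 less_Suc_eq)
  show "inner (pv (k div 3)) (pv (k div 3)) = 1" using \<open>k<9\<close> by (intro u) auto
  show "inner (pv (k mod 3)) (pv (k mod 3)) = 1" by (intro u) auto
qed

lemma ES_povm: "povm ES"
  unfolding povm_def
proof (intro conjI allI)
  fix x show "psd (ES x)" by (rule sepc_psd[OF sep_elem_sepc[OF ES_sep]])
next
  fix i j :: "bool \<times> bool"
  show "(\<Sum>x\<in>UNIV. ES x i j) = idm i j"
    unfolding sum_res ES_def sum9 cc_def
    by (cases i; cases j; simp add: out_def lab_def outer_def tens_def pv_def idm_def r3sq r3sq2 algebra_simps)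
qed

lemma inner_psi_tens: "inner (psi i) (tens a b) = inner (s i) a * inner (s i) b"
  by (simp add: psi_def inner_tens)

lemma ES_exp: "expect v (ES x) = (\<Sum>k<9. complex_of_real (cc x k) * (inner v (tens (pv (k div 3)) (pv (k mod 3))) * cnj (inner v (tens (pv (k div 3)) (pv (k mod 3))))))"
  unfolding ES_def expect_sum expect_smult expect_outer by simp

lemma ES_ud: "ud_povm ES"
  by (rule ud_intro[OF ES_povm]) (simp_all add: ES_exp sum9 cc_def out_def lab_def inner_psi_tens inner_s0 inner_s1 inner_s2 pv_def)

lemma ES_succ: "succ_prob ES = 1/2"
  unfolding succ_prob_def sum3
  by (simp add: ES_exp sum9 cc_def out_def lab_def inner_psi_tens inner_s0 inner_s1 inner_s2 pv_def r3sq r3sq2 algebra_simps)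




definition c23 :: complex where "c23 = complex_of_real (sqrt (2/3))"
lemma c23sq: "cnj c23 * c23 = 2/3" unfolding c23_def by (simp flip: of_real_mult)

definition KA :: "nat \<Rightarrow> qop" where "KA k = (\<lambda>r c. if r then 0 else c23 * cnj (pv k c))"
definition ST :: "nat \<Rightarrow> nat \<Rightarrow> res \<Rightarrow> top" where "ST k l = (\<lambda>x. if x = out k l then idm else zop)"
definition FB :: "nat \<Rightarrow> res \<Rightarrow> top" where
  "FB k = (\<lambda>x i j. \<Sum>l<3. mmul (adj (kron idm (KA l))) (mmul (ST k l x) (kron idm (KA l))) i j)"
definition EL :: "res \<Rightarrow> top" where
  "EL = (\<lambda>x i j. \<Sum>k<3. mmul (adj (kron (KA k) idm)) (mmul (FB k x) (kron (KA k) idm)) i j)"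

lemma KK: "mmul (adj (KA k)) (KA k) = (\<lambda>i j. (2/3) * outer (pv k) (pv k) i j)"
proof (intro ext)
  fix i j
  have "cnj (c23 * cnj (pv k i)) * (c23 * cnj (pv k j)) = (cnj c23 * c23) * (pv k i * cnj (pv k j))"
    by (simp add: mult_ac)
  thus "mmul (adj (KA k)) (KA k) i j = (2/3) * outer (pv k) (pv k) i j"
    by (simp add: mmul_def adj_def KA_def outer_def sum_b c23sq)
qed

lemma kraus: "\<forall>i j. (\<Sum>k<3. mmul (adj (KA k)) (KA k) i j) = idm i j"
proof (intro allI)
  fix i j :: bool
  show "(\<Sum>k<3. mmul (adj (KA k)) (KA k) i j) = idm i j"
    unfolding sum3 KK outer_def
    by (cases i; cases j; simp add: pv_def idm_def r3sq)
qed

lemma EL_locc: "locc EL"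
  unfolding EL_def
proof (rule locc.stepA[OF kraus], intro allI impI)
  fix k :: nat assume "k < 3"
  show "locc (FB k)" unfolding FB_def
  proof (rule locc.stepB[OF kraus], intro allI impI)
    fix l :: nat assume "l < 3"
    show "locc (ST k l)" unfolding ST_def by (rule locc.stop)
  qed
qed

lemma L_sum: "mmul (adj M) (mmul (\<lambda>i j. \<Sum>l\<in>S. G l i j) M) = (\<lambda>i j. \<Sum>l\<in>S. mmul (adj M) (mmul (G l) M) i j)"
proof (intro ext)
  fix i j
  have "mmul (adj M) (mmul (\<lambda>i j. \<Sum>l\<in>S. G l i j) M) i j = (\<Sum>p\<in>UNIV. \<Sum>q\<in>UNIV. \<Sum>l\<in>S. adj M i p * (G l p q * M q j))"
    by (simp add: mmul_def sum_distrib_left sum_distrib_right mult.assoc)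
  also have "\<dots> = (\<Sum>p\<in>UNIV. \<Sum>l\<in>S. \<Sum>q\<in>UNIV. adj M i p * (G l p q * M q j))"
    by (rule sum.cong[OF refl], rule sum.swap)
  also have "\<dots> = (\<Sum>l\<in>S. \<Sum>p\<in>UNIV. \<Sum>q\<in>UNIV. adj M i p * (G l p q * M q j))"
    by (rule sum.swap)
  also have "\<dots> = (\<Sum>l\<in>S. mmul (adj M) (mmul (G l) M) i j)"
    by (simp add: mmul_def sum_distrib_left)
  finally show "mmul (adj M) (mmul (\<lambda>i j. \<Sum>l\<in>S. G l i j) M) i j = (\<Sum>l\<in>S. mmul (adj M) (mmul (G l) M) i j)" .
qed

lemma L_if: "mmul (adj M) (mmul (if b then A else zop) M) = (if b then mmul (adj M) (mmul A M) else zop)"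
  by (cases b) (simp_all add: mmul_def zop_def)

lemma L_kB: "mmul (adj (kron idm L)) (mmul (kron A B) (kron idm L)) = kron A (mmul (adj L) (mmul B L))"
  by (intro ext) (simp add: mmul_def adj_def kron_def idm_def sum_bb sum_b algebra_simps)
lemma L_kA: "mmul (adj (kron L idm)) (mmul (kron A B) (kron L idm)) = kron (mmul (adj L) (mmul A L)) B"
  by (intro ext) (simp add: mmul_def adj_def kron_def idm_def sum_bb sum_b algebra_simps)

lemma idm_kron: "(idm::top) = kron idm idm" by (intro ext) (auto simp: idm_def kron_def)
lemma mmul_idm: "mmul (idm::qop) A = A" by (intro ext) (simp add: mmul_def idm_def sum_b)

lemma kron_outer: "kron (\<lambda>i j. a * outer u u i j) (\<lambda>i j. b * outer v v i j) = (\<lambda>i j. (a*b) * outer (tens u v) (tens u v) i j)"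
  by (intro ext) (simp add: kron_def outer_def tens_def algebra_simps)

lemma EL_form: "EL x = (\<lambda>i j. \<Sum>k<3. \<Sum>l<3. (if x = out k l then (4/9) * outer (tens (pv k) (pv l)) (tens (pv k) (pv l)) i j else 0))"
proof -
  have fb: "FB k x = (\<lambda>i j. \<Sum>l<3. (if x = out k l then kron idm (\<lambda>i j. (2/3) * outer (pv l) (pv l) i j) else zop) i j)" for k
    unfolding FB_def ST_def L_if idm_kron L_kB mmul_idm KK by simp
  show ?thesis
    unfolding EL_def fb L_sum L_if L_kA mmul_idm KK[unfolded mmul_idm] kron_outer
    apply (intro ext)
    apply (rule sum.cong[OF refl], rule sum.cong[OF refl])
    apply (simp add: zop_def)
    done
qed


lemma sum3': "(\<Sum>i<(3::nat). f i) = f 0 + f 1 + (f 2 :: 'a::comm_monoid_add)"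
proof -
  have "{..<3::nat} = {0,1,2}" by auto
  thus ?thesis by (simp add: add.assoc)
qed

lemma EL_ES: "EL = ES"
proof (intro ext)
  fix x i j
  show "EL x i j = ES x i j"
    unfolding EL_form ES_def sum3' sum9 cc_def
    by (cases x) (simp_all add: out_def lab_def add.assoc)
qed

theorem mainTheorem17:
  shows "((\<exists>E. ud_povm E \<and> succ_prob E = 3/4) \<and>
          (\<forall>E. ud_povm E \<longrightarrow> succ_prob E \<le> 3/4))
       \<and> ((\<exists>E. ud_povm E \<and> sep_povm E \<and> succ_prob E = 1/2) \<and>
          (\<forall>E. ud_povm E \<and> sep_povm E \<longrightarrow> succ_prob E \<le> 1/2))
       \<and> ((\<exists>E. ud_povm E \<and> locc_povm E \<and> succ_prob E = 1/2) \<and>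
          (\<forall>E. ud_povm E \<and> locc_povm E \<longrightarrow> succ_prob E \<le> 1/2))"
proof (intro conjI allI impI)
  show "\<exists>E. ud_povm E \<and> succ_prob E = 3/4" using EG_ud EG_succ by blast
  show "succ_prob E \<le> 3/4" if "ud_povm E" for E by (rule bound1[OF that])
  show "\<exists>E. ud_povm E \<and> sep_povm E \<and> succ_prob E = 1/2"
  proof (intro exI conjI)
    show "sep_povm ES" unfolding sep_povm_def using ES_povm ES_sep by blast
  qed (rule ES_ud, rule ES_succ)
  show "succ_prob E \<le> 1/2" if "ud_povm E \<and> sep_povm E" for E
  proof (rule bound2)
    show "ud_povm E" using that by blast
    fix x show "sepc (E x)" using that unfolding sep_povm_def by (blast intro: sep_elem_sepc)
  qed
  show "\<exists>E. ud_povm E \<and> locc_povm E \<and> succ_prob E = 1/2"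
  proof (intro exI conjI)
    show "locc_povm ES" unfolding locc_povm_def using ES_povm EL_locc EL_ES by simp
  qed (rule ES_ud, rule ES_succ)
  show "succ_prob E \<le> 1/2" if "ud_povm E \<and> locc_povm E" for E
  proof (rule bound2)
    show "ud_povm E" using that by blast
    fix x show "sepc (E x)" using that unfolding locc_povm_def by (blast intro: locc_sepc)
  qed
qed


end
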